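(* Let $\mathcal J$ be a generalized almost complex structure and $D$ a torsion-free generalized connection on a Courant algebroid $E$. For $u\in E$ let $A_u$ be the endomorphism $v\mapsto(D_v\mathcal J)u$ of $E$ and $A_u^{\mathrm{sym}}$ its $\langle\cdot,\cdot\rangle$-symmetric part. Define $$\tilde D_uv=D_uv-\tfrac14\{A_u^{\mathrm{sym}},\mathcal J\}v-\tfrac12\mathcal J(D_u\mathcal J)v,$$ where $\{X,Y\}=XY+YX$. Then $\tilde D$ is a generalized connection with $\tilde D\mathcal J=0$, and its torsion satisfies $T^{\tilde D}(u,v,w)=\frac14N_{\mathcal J}(u,v,w)$ for all $u,v,w$. In particular, if $\mathcal J$ is integrable, then $\tilde D$ is torsion-free (and preserves $\mathcal J$).
   Context: A Courant algebroid on $M$ is a real vector bundle $E\to M$ with nondegenerate symmetric bilinear form $\langle\cdot,\cdot\rangle$, an $\mathbb R$-bilinear bracket $[\cdot,\cdot]$ on $\Gamma(E)$ and bundle map $\pi:E\to TM$ such that for $u,v,w\in\Gamma(E)$, $f\in C^\infty(M)$: $[u,[v,w]]=[[u,v],w]+[v,[u,w]]$; $\pi([u,v])=[\pi(u),\pi(v)]$; $[u,fv]=\pi(u)(f)v+f[u,v]$; $\pi(u)\langle v,w\rangle=\langle[u,v],w\rangle+\langle v,[u,w]\rangle$; $2\langle[u,u],v\rangle=\pi(v)\langle u,u\rangle$. A generalized connection is an $\mathbb R$-linear $D:\Gamma(E)\to\Gamma(E^*\otimes E)$ with $D_u(fv)=\pi(u)(f)v+fD_uv$ and $\pi(u)\langle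 v,w\rangle=\langle D_uv,w\rangle+\langle v,D_uw\rangle$; its torsion is $T^D(u,v)=D_uv-D_vu-[u,v]+(Du)^*v$ ($(Du)^*$ adjoint of $w\mapsto D_wu$), $T^D(u,v,w)=\langle T^D(u,v),w\rangle$. A generalized almost complex structure is a $\langle\cdot,\cdot\rangle$-orthogonal $\mathcal J$ with $\mathcal J^2=-\mathrm{Id}$; $N_{\mathcal J}(u,v)=[\mathcal Ju,\mathcal Jv]-[u,v]-\mathcal J([\mathcal Ju,v]+[u,\mathcal Jv])$, $N_{\mathcal J}(u,v,w)=\langle N_{\mathcal J}(u,v),w\rangle$; $\mathcal J$ is integrable if $N_{\mathcal J}=0$. *)

theory Defs
  imports Main "HOL.Real_Vector_Spaces"
begin

text \<open>The type 'r plays the role of the commutative real algebra C^infinity(M);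
  the type 's plays the role of the module of sections Gamma(E), with
  module action sm f u = f u.  The anchor is given on sections:
  anc u is the vector field pi(u), acting as a derivation on functions.
  Real scalars c act on sections through sm (of_real c).\<close>

definition module_over :: "('r::comm_ring_1 \<Rightarrow> 's::ab_group_add \<Rightarrow> 's) \<Rightarrow> bool" where
  "module_over sm \<longleftrightarrow>
     (\<forall>f u v. sm f (u + v) = sm f u + sm f v) \<and>
     (\<forall>f g u. sm (f + g) u = sm f u + sm g u) \<and>
     (\<forall>f g u. sm (f * g) u = sm f (sm g u)) \<and>
     (\<forall>u. sm 1 u = u)"

text \<open>C^infinity(M)-linear functionals on sections (= sections of E^*).\<close>
definition functional :: "('r::comm_ring_1 \<Rightarrow> 's::ab_group_add \<Rightarrow> 's) \<Rightarrow> ('s \<Rightarrow> 'r) \<Rightarrow> bool" where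
  "functional sm \<phi> \<longleftrightarrow>
     (\<forall>u v. \<phi> (u + v) = \<phi> u + \<phi> v) \<and> (\<forall>f u. \<phi> (sm f u) = f * \<phi> u)"

text \<open>C^infinity(M)-linear endomorphisms of sections (= bundle endomorphisms).\<close>
definition endo :: "('r::comm_ring_1 \<Rightarrow> 's::ab_group_add \<Rightarrow> 's) \<Rightarrow> ('s \<Rightarrow> 's) \<Rightarrow> bool" where
  "endo sm A \<longleftrightarrow> (\<forall>f u v. A (sm f u + v) = sm f (A u) + A v)"

definition sym_bilinear :: "('r::comm_ring_1 \<Rightarrow> 's::ab_group_add \<Rightarrow> 's) \<Rightarrow> ('s \<Rightarrow> 's \<Rightarrow> 'r) \<Rightarrow> bool" where
  "sym_bilinear sm ip \<longleftrightarrow>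
     (\<forall>u v. ip u v = ip v u) \<and>
     (\<forall>f u u' v. ip (sm f u + u') v = f * ip u v + ip u' v)"

text \<open>Nondegeneracy: the musical map E \<rightarrow> E^* is an isomorphism on sections.\<close>
definition nondegenerate :: "('r::comm_ring_1 \<Rightarrow> 's::ab_group_add \<Rightarrow> 's) \<Rightarrow> ('s \<Rightarrow> 's \<Rightarrow> 'r) \<Rightarrow> bool" where
  "nondegenerate sm ip \<longleftrightarrow>
     (\<forall>\<phi>. functional sm \<phi> \<longrightarrow> (\<exists>!w. \<forall>u. \<phi> u = ip w u))"

text \<open>Anchor: C^infinity(M)-linear map from sections to vector fields
  (real-linear derivations of C^infinity(M)).\<close>
definition anchor_map :: "('r::{comm_ring_1,real_algebra_1} \<Rightarrow> 's::ab_group_add \<Rightarrow> 's) \<Rightarrow> ('s \<Rightarrow> 'r \<Rightarrow> 'r) \<Rightarrow> bool" where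
  "anchor_map sm anc \<longleftrightarrow>
     (\<forall>f u v g. anc (sm f u + v) g = f * anc u g + anc v g) \<and>
     (\<forall>u g h. anc u (g + h) = anc u g + anc u h) \<and>
     (\<forall>u g h. anc u (g * h) = anc u g * h + g * anc u h) \<and>
     (\<forall>u c g. anc u (of_real c * g) = of_real c * anc u g)"

definition real_bilinear :: "('r::{comm_ring_1,real_algebra_1} \<Rightarrow> 's::ab_group_add \<Rightarrow> 's) \<Rightarrow> ('s \<Rightarrow> 's \<Rightarrow> 's) \<Rightarrow> bool" where
  "real_bilinear sm br \<longleftrightarrow>
     (\<forall>u u' v. br (u + u') v = br u v + br u' v) \<and>
     (\<forall>u v v'. br u (v + v') = br u v + br u v') \<and>
     (\<forall>c u v. br (sm (of_real c) u) v = sm (of_real c) (br u v)) \<and>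
     (\<forall>c u v. br u (sm (of_real c) v) = sm (of_real c) (br u v))"

definition courant_algebroid ::
  "('r::{comm_ring_1,real_algebra_1} \<Rightarrow> 's::ab_group_add \<Rightarrow> 's) \<Rightarrow> ('s \<Rightarrow> 's \<Rightarrow> 'r) \<Rightarrow>
   ('s \<Rightarrow> 's \<Rightarrow> 's) \<Rightarrow> ('s \<Rightarrow> 'r \<Rightarrow> 'r) \<Rightarrow> bool" where
  "courant_algebroid sm ip br anc \<longleftrightarrow>
     module_over sm \<and> sym_bilinear sm ip \<and> nondegenerate sm ip \<and>
     anchor_map sm anc \<and> real_bilinear sm br \<and>
     (\<forall>u v w. br u (br v w) = br (br u v) w + br v (br u w)) \<and>
     (\<forall>u v g. anc (br u v) g = anc u (anc v g) - anc v (anc u g)) \<and>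
     (\<forall>u v f. br u (sm f v) = sm (anc u f) v + sm f (br u v)) \<and>
     (\<forall>u v w. anc u (ip v w) = ip (br u v) w + ip v (br u w)) \<and>
     (\<forall>u v. 2 * ip (br u u) v = anc v (ip u u))"

text \<open>Generalized connection D, written D u v = D_u v.  C^infinity(M)-linearity in u
  expresses that D v is a section of E^* \<otimes> E.\<close>
definition gen_connection ::
  "('r::{comm_ring_1,real_algebra_1} \<Rightarrow> 's::ab_group_add \<Rightarrow> 's) \<Rightarrow> ('s \<Rightarrow> 's \<Rightarrow> 'r) \<Rightarrow>
   ('s \<Rightarrow> 'r \<Rightarrow> 'r) \<Rightarrow> ('s \<Rightarrow> 's \<Rightarrow> 's) \<Rightarrow> bool" where
  "gen_connection sm ip anc D \<longleftrightarrow>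
     (\<forall>f u u' v. D (sm f u + u') v = sm f (D u v) + D u' v) \<and>
     (\<forall>u v v'. D u (v + v') = D u v + D u v') \<and>
     (\<forall>c u v. D u (sm (of_real c) v) = sm (of_real c) (D u v)) \<and>
     (\<forall>u v f. D u (sm f v) = sm (anc u f) v + sm f (D u v)) \<and>
     (\<forall>u v w. anc u (ip v w) = ip (D u v) w + ip v (D u w))"

definition adjoint :: "('s \<Rightarrow> 's \<Rightarrow> 'r) \<Rightarrow> ('s \<Rightarrow> 's) \<Rightarrow> 's \<Rightarrow> 's" where
  "adjoint ip A v = (THE z. \<forall>w. ip z w = ip v (A w))"

definition torsion ::
  "('s::ab_group_add \<Rightarrow> 's \<Rightarrow> 'r) \<Rightarrow> ('s \<Rightarrow> 's \<Rightarrow> 's) \<Rightarrow> ('s \<Rightarrow> 's \<Rightarrow> 's) \<Rightarrow> 's \<Rightarrow> 's \<Rightarrow> 's" where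
  "torsion ip br D u v = D u v - D v u - br u v + adjoint ip (\<lambda>w. D w u) v"

definition gen_almost_complex ::
  "('r::comm_ring_1 \<Rightarrow> 's::ab_group_add \<Rightarrow> 's) \<Rightarrow> ('s \<Rightarrow> 's \<Rightarrow> 'r) \<Rightarrow> ('s \<Rightarrow> 's) \<Rightarrow> bool" where
  "gen_almost_complex sm ip J \<longleftrightarrow>
     endo sm J \<and> (\<forall>u v. ip (J u) (J v) = ip u v) \<and> (\<forall>u. J (J u) = - u)"

definition nijenhuis :: "('s::ab_group_add \<Rightarrow> 's \<Rightarrow> 's) \<Rightarrow> ('s \<Rightarrow> 's) \<Rightarrow> 's \<Rightarrow> 's \<Rightarrow> 's" where
  "nijenhuis br J u v = br (J u) (J v) - br u v - J (br (J u) v + br u (J v))"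

definition covD :: "('s::ab_group_add \<Rightarrow> 's \<Rightarrow> 's) \<Rightarrow> ('s \<Rightarrow> 's) \<Rightarrow> 's \<Rightarrow> 's \<Rightarrow> 's" where
  "covD D J u v = D u (J v) - J (D u v)"

definition A_endo :: "('s::ab_group_add \<Rightarrow> 's \<Rightarrow> 's) \<Rightarrow> ('s \<Rightarrow> 's) \<Rightarrow> 's \<Rightarrow> 's \<Rightarrow> 's" where
  "A_endo D J u = (\<lambda>v. covD D J v u)"

definition sym_part :: "('r::real_algebra_1 \<Rightarrow> 's::ab_group_add \<Rightarrow> 's) \<Rightarrow> ('s \<Rightarrow> 's \<Rightarrow> 'r) \<Rightarrow> ('s \<Rightarrow> 's) \<Rightarrow> 's \<Rightarrow> 's" where
  "sym_part sm ip A = (\<lambda>v. sm (of_real (1/2)) (A v + adjoint ip A v))"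

definition modified_conn ::
  "('r::real_algebra_1 \<Rightarrow> 's::ab_group_add \<Rightarrow> 's) \<Rightarrow> ('s \<Rightarrow> 's \<Rightarrow> 'r) \<Rightarrow>
   ('s \<Rightarrow> 's \<Rightarrow> 's) \<Rightarrow> ('s \<Rightarrow> 's) \<Rightarrow> 's \<Rightarrow> 's \<Rightarrow> 's" where
  "modified_conn sm ip D J u v =
     (let As = sym_part sm ip (A_endo D J u) in
      D u v - sm (of_real (1/4)) (As (J v) + J (As v))
            - sm (of_real (1/2)) (J (covD D J u v)))"

end

theory Submission
  imports Defs
begin

locale CA =
  fixes sm :: "'r::{comm_ring_1,real_algebra_1} \<Rightarrow> 's::ab_group_add \<Rightarrow> 's"
    and ip :: "'s \<Rightarrow> 's \<Rightarrow> 'r"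
    and br :: "'s \<Rightarrow> 's \<Rightarrow> 's"
    and anc :: "'s \<Rightarrow> 'r \<Rightarrow> 'r"
    and D :: "'s \<Rightarrow> 's \<Rightarrow> 's"
    and J :: "'s \<Rightarrow> 's"
  assumes ca: "courant_algebroid sm ip br anc"
    and gj: "gen_almost_complex sm ip J"
    and gc: "gen_connection sm ip anc D"
    and tf: "\<forall>u v. torsion ip br D u v = 0"
begin

lemma sm_addR: "sm f (u + v) = sm f u + sm f v"
  using ca unfolding courant_algebroid_def module_over_def by auto
lemma sm_addL: "sm (f + g) u = sm f u + sm g u"
  using ca unfolding courant_algebroid_def module_over_def by auto
lemma sm_mult: "sm (f * g) u = sm f (sm g u)"
  using ca unfolding courant_algebroid_def module_over_def by auto
lemma sm_one: "sm 1 u = u"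
  using ca unfolding courant_algebroid_def module_over_def by auto
lemma sm_zeroR: "sm f 0 = 0"
  using sm_addR[of f 0 0] by simp
lemma sm_zeroL: "sm 0 u = 0"
  using sm_addL[of 0 0 u] by simp
lemma sm_negR: "sm f (- u) = - sm f u"
  using sm_addR[of f u "-u"] by (simp add: sm_zeroR minus_unique)
lemma sm_diffR: "sm f (u - v) = sm f u - sm f v"
  using sm_addR[of f u "-v"] by (simp add: sm_negR)

lemma ip_sym: "ip u v = ip v u"
  using ca unfolding courant_algebroid_def sym_bilinear_def by auto
lemma ip_lin: "ip (sm f u + u') v = f * ip u v + ip u' v"
  using ca unfolding courant_algebroid_def sym_bilinear_def by auto
lemma ip_addL: "ip (u + u') v = ip u v + ip u' v"
  using ip_lin[of 1 u u' v] by (simp add: sm_one)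
lemma ip_zeroL: "ip 0 v = 0"
  using ip_addL[of 0 0 v] by simp
lemma ip_smL: "ip (sm f u) v = f * ip u v"
  using ip_lin[of f u 0 v] by (simp add: ip_zeroL)
lemma ip_negL: "ip (- u) v = - ip u v"
  using ip_addL[of u "-u" v] by (simp add: ip_zeroL minus_unique)
lemma ip_diffL: "ip (u - u') v = ip u v - ip u' v"
  using ip_addL[of u "-u'" v] by (simp add: ip_negL)
lemma ip_addR: "ip v (u + u') = ip v u + ip v u'"
  by (metis ip_addL ip_sym)
lemma ip_zeroR: "ip v 0 = 0"
  by (metis ip_zeroL ip_sym)
lemma ip_smR: "ip v (sm f u) = f * ip v u"
  by (metis ip_smL ip_sym)
lemma ip_negR: "ip v (- u) = - ip v u"
  by (metis ip_negL ip_sym)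
lemma ip_diffR: "ip v (u - u') = ip v u - ip v u'"
  by (metis ip_diffL ip_sym)

lemmas ip_simps = ip_addL ip_zeroL ip_smL ip_negL ip_diffL ip_addR ip_zeroR ip_smR ip_negR ip_diffR

lemma functional_ip: "functional sm (ip y)"
  unfolding functional_def by (simp add: ip_addR ip_smR)

lemma ext_ip: assumes "\<And>w. ip x w = ip y w" shows "x = y"
proof -
  have nd: "nondegenerate sm ip" using ca unfolding courant_algebroid_def by blast
  from nd functional_ip[of y] have "\<exists>!z. \<forall>u. ip y u = ip z u"
    unfolding nondegenerate_def by blast
  then show ?thesis using assms by metis
qed

lemma endo_add: "endo sm A \<Longrightarrow> A (u + v) = A u + A v"
  unfolding endo_def by (metis sm_one)
lemma endo_zero: "endo sm A \<Longrightarrow> A 0 = 0"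
  using endo_add[of A 0 0] by simp
lemma endo_sm: "endo sm A \<Longrightarrow> A (sm f u) = sm f (A u)"
  unfolding endo_def by (metis add.right_neutral endo_def endo_zero)

lemma adjoint_char:
  assumes "endo sm A" shows "ip (adjoint ip A v) w = ip v (A w)"
proof -
  have nd: "nondegenerate sm ip" using ca unfolding courant_algebroid_def by blast
  have "functional sm (\<lambda>w. ip v (A w))"
    unfolding functional_def using assms by (simp add: endo_add endo_sm ip_addR ip_smR)
  with nd have ex: "\<exists>!z. \<forall>u. ip v (A u) = ip z u"
    unfolding nondegenerate_def by blast
  then obtain z where z: "\<forall>u. ip v (A u) = ip z u" by blast
  have "(THE z. \<forall>w. ip z w = ip v (A w)) = z"
    by (rule the_equality) (use z ex in auto)
  then show ?thesis unfolding adjoint_def using z by simp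
qed

lemma J_endo: "endo sm J" using gj unfolding gen_almost_complex_def by auto
lemma J_add: "J (u + v) = J u + J v" using endo_add[OF J_endo] .
lemma J_sm: "J (sm f u) = sm f (J u)" using endo_sm[OF J_endo] .
lemma J_zero: "J 0 = 0" using endo_zero[OF J_endo] .
lemma J_neg: "J (- u) = - J u"
  using J_add[of u "-u"] by (simp add: J_zero minus_unique)
lemma J_diff: "J (u - v) = J u - J v"
  using J_add[of u "-v"] by (simp add: J_neg)
lemma JJ: "J (J u) = - u" using gj unfolding gen_almost_complex_def by auto
lemma ip_JJ: "ip (J u) (J v) = ip u v" using gj unfolding gen_almost_complex_def by auto
lemma ip_JL: "ip (J u) v = - ip u (J v)"
proof -
  have "ip (J u) v = ip (J (J u)) (J v)" by (simp add: ip_JJ)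
  also have "\<dots> = - ip u (J v)" by (simp add: JJ ip_negL)
  finally show ?thesis .
qed

lemma anc_lin: "anc (sm f u + v) g = f * anc u g + anc v g"
  using ca unfolding courant_algebroid_def anchor_map_def by auto
lemma anc_addR: "anc u (g + h) = anc u g + anc u h"
  using ca unfolding courant_algebroid_def anchor_map_def by auto
lemma anc_mult: "anc u (g * h) = anc u g * h + g * anc u h"
  using ca unfolding courant_algebroid_def anchor_map_def by auto
lemma anc_ofreal: "anc u (of_real c * g) = of_real c * anc u g"
  using ca unfolding courant_algebroid_def anchor_map_def by auto
lemma anc_zero: "anc u 0 = 0"
  using anc_addR[of u 0 0] by simp
lemma anc_neg: "anc u (- g) = - anc u g"
  using anc_addR[of u g "-g"] by (simp add: anc_zero minus_unique)
lemma anc_one: "anc u 1 = 0"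
  using anc_mult[of u 1 1] by simp
lemma anc_const: "anc u (of_real c) = 0"
  using anc_ofreal[of u c 1] by (simp add: anc_one)

lemma D_lin: "D (sm f u + u') v = sm f (D u v) + D u' v"
  using gc unfolding gen_connection_def by auto
lemma D_addR: "D u (v + v') = D u v + D u v'"
  using gc unfolding gen_connection_def by auto
lemma D_leib: "D u (sm f v) = sm (anc u f) v + sm f (D u v)"
  using gc unfolding gen_connection_def by auto
lemma D_metric: "anc u (ip v w) = ip (D u v) w + ip v (D u w)"
  using gc unfolding gen_connection_def by auto
lemma D_endo: "endo sm (\<lambda>w. D w u)"
  unfolding endo_def by (simp add: D_lin)
lemma D_addL: "D (u + u') v = D u v + D u' v" using endo_add[OF D_endo] .
lemma D_smL: "D (sm f u) v = sm f (D u v)" using endo_sm[OF D_endo] .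
lemma D_zeroL: "D 0 v = 0" using endo_zero[OF D_endo] .
lemma D_negL: "D (- u) v = - D u v"
  using D_addL[of u "-u" v] by (simp add: D_zeroL minus_unique)
lemma D_zeroR: "D u 0 = 0"
  using D_addR[of u 0 0] by simp
lemma D_negR: "D u (- v) = - D u v"
  using D_addR[of u v "-v"] by (simp add: D_zeroR minus_unique)

abbreviation "Cv \<equiv> covD D J"

lemma C_def: "Cv x y = D x (J y) - J (D x y)" unfolding covD_def ..
lemma C_endoL: "endo sm (\<lambda>x. Cv x y)"
  unfolding endo_def covD_def by (simp add: D_lin J_add J_sm sm_diffR)
lemma C_addL: "Cv (x + x') y = Cv x y + Cv x' y" using endo_add[OF C_endoL] .
lemma C_smL: "Cv (sm f x) y = sm f (Cv x y)" using endo_sm[OF C_endoL] .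
lemma C_zeroL: "Cv 0 y = 0" using endo_zero[OF C_endoL] .
lemma C_negL: "Cv (- x) y = - Cv x y"
  using C_addL[of x "-x" y] by (simp add: C_zeroL minus_unique)
lemma C_addR: "Cv x (y + y') = Cv x y + Cv x y'"
  unfolding covD_def by (simp add: D_addR J_add)
lemma C_smR: "Cv x (sm f y) = sm f (Cv x y)"
  unfolding covD_def by (simp add: D_leib J_add J_sm sm_diffR)
lemma C_zeroR: "Cv x 0 = 0"
  using C_addR[of x 0 0] by simp
lemma C_negR: "Cv x (- y) = - Cv x y"
  using C_addR[of x y "-y"] by (simp add: C_zeroR minus_unique)
lemma C_J: "Cv x (J y) = - J (Cv x y)"
  unfolding covD_def by (simp add: JJ D_negR J_diff)
lemma DJ: "D x (J y) = Cv x y + J (D x y)"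
  unfolding covD_def by simp

lemma Phi_skew: "ip (Cv x y) z = - ip (Cv x z) y"
proof -
  have a: "ip (Cv x y) z = ip (D x (J y)) z + ip (D x y) (J z)"
    unfolding covD_def by (simp add: ip_diffL ip_JL)
  have b: "ip (Cv x z) y = ip (D x (J z)) y + ip (D x z) (J y)"
    unfolding covD_def by (simp add: ip_diffL ip_JL)
  have "anc x (ip (J y) z) + anc x (ip y (J z)) = 0"
    using ip_JL[of y z] by (simp add: anc_neg)
  then have "ip (D x (J y)) z + ip (J y) (D x z) + (ip (D x y) (J z) + ip y (D x (J z))) = 0"
    by (simp add: D_metric)
  then show ?thesis using a b by (simp add: ip_sym[of "J y"] ip_sym[of y] algebra_simps minus_unique eq_neg_iff_add_eq_0)
qed

lemma Phi_swapJ: "ip (Cv x y) (J z) = - ip (Cv x z) (J y)"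
proof -
  have "ip (Cv x y) (J z) = - ip (Cv x (J z)) y" by (rule Phi_skew)
  also have "\<dots> = ip (J (Cv x z)) y" by (simp add: C_J ip_negL)
  also have "\<dots> = - ip (Cv x z) (J y)" by (rule ip_JL)
  finally show ?thesis .
qed

lemma Phi_JJ: "ip (Cv x (J y)) (J z) = - ip (Cv x y) z"
  by (simp add: C_J ip_negL ip_JJ)

abbreviation "Dt \<equiv> modified_conn sm ip D J"
abbreviation "ee \<equiv> (of_real (1/8) :: 'r)"

lemma A_endo_endo: "endo sm (A_endo D J u)"
  unfolding A_endo_def by (rule C_endoL)

lemma ip_As: "ip (sym_part sm ip (A_endo D J u) x) w
   = of_real (1/2) * (ip (Cv x u) w + ip (Cv w u) x)"
  unfolding sym_part_def by (simp add: ip_smL ip_addL adjoint_char[OF A_endo_endo] ip_sym[of x]) (simp add: A_endo_def)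

lemma h42: "(of_real (1/4) :: 'r) * of_real (1/2) = ee"
  by (simp flip: of_real_mult)
lemma h2: "(of_real (1/2) :: 'r) = 4 * ee"
proof -
  have "(of_real (1/2) :: 'r) = of_real (4 * (1/8))" by simp
  also have "\<dots> = 4 * ee" by (simp only: of_real_mult) simp
  finally show ?thesis .
qed
lemma h4: "(of_real (1/4) :: 'r) = 2 * ee"
proof -
  have "(of_real (1/4) :: 'r) = of_real (2 * (1/8))" by simp
  also have "\<dots> = 2 * ee" by (simp only: of_real_mult) simp
  finally show ?thesis .
qed
lemma e8: "8 * ee = 1"
proof -
  have "(1::'r) = of_real (8 * (1/8))" by simp
  also have "\<dots> = 8 * ee" by (simp only: of_real_mult) simp
  finally show ?thesis by simp
qed

lemma Dt_ip: "ip (Dt u v) w = ip (D u v) w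
   - ee * (ip (Cv (J v) u) w + ip (Cv w u) (J v) - ip (Cv v u) (J w) - ip (Cv (J w) u) v)
   + 4 * ee * ip (Cv u v) (J w)"
proof -
  have "ip (Dt u v) w = ip (D u v) w
     - of_real (1/4) * (ip (sym_part sm ip (A_endo D J u) (J v)) w + ip (J (sym_part sm ip (A_endo D J u) v)) w)
     - of_real (1/2) * ip (J (Cv u v)) w"
    unfolding modified_conn_def Let_def by (simp add: ip_diffL ip_smL ip_addL)
  also have "\<dots> = ip (D u v) w
     - of_real (1/4) * (of_real (1/2) * (ip (Cv (J v) u) w + ip (Cv w u) (J v))
        - of_real (1/2) * (ip (Cv v u) (J w) + ip (Cv (J w) u) v))
     + of_real (1/2) * ip (Cv u v) (J w)"
    by (simp add: ip_JL[of "sym_part _ _ _ _"] ip_JL[of "Cv u v"] ip_As)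
  also have "\<dots> = ip (D u v) w
   - ee * (ip (Cv (J v) u) w + ip (Cv w u) (J v) - ip (Cv v u) (J w) - ip (Cv (J w) u) v)
   + 4 * ee * ip (Cv u v) (J w)"
    by (simp only: right_diff_distrib mult.assoc[symmetric] h42) (simp only: h2, simp add: algebra_simps)
  finally show ?thesis .
qed

lemmas lin_simps = ip_simps C_addL C_smL C_addR C_smR C_negL C_negR J_add J_sm J_neg D_addR D_lin D_addL D_smL D_negL D_negR

lemma Dt_linL: "Dt (sm f u + u') v = sm f (Dt u v) + Dt u' v"
  by (rule ext_ip) (simp add: Dt_ip lin_simps algebra_simps)

lemma Dt_addR: "Dt u (v + v') = Dt u v + Dt u v'"
  by (rule ext_ip) (simp add: Dt_ip lin_simps algebra_simps)

lemma Dt_leib: "Dt u (sm f v) = sm (anc u f) v + sm f (Dt u v)"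
  by (rule ext_ip) (simp add: Dt_ip lin_simps D_leib algebra_simps)

lemma Dt_real: "Dt u (sm (of_real c) v) = sm (of_real c) (Dt u v)"
  by (simp add: Dt_leib anc_const sm_zeroL)

lemma Dt_metric: "anc u (ip v w) = ip (Dt u v) w + ip v (Dt u w)"
proof -
  have "ip v (Dt u w) = ip (Dt u w) v" by (rule ip_sym)
  moreover have "ip (Cv u w) (J v) = - ip (Cv u v) (J w)" by (rule Phi_swapJ)
  moreover have "anc u (ip v w) = ip (D u v) w + ip (D u w) v"
    using D_metric[of u v w] ip_sym[of v "D u w"] by simp
  ultimately show ?thesis by (simp add: Dt_ip algebra_simps)
qed

lemma Dt_conn: "gen_connection sm ip anc Dt"
  unfolding gen_connection_def using Dt_linL Dt_addR Dt_real Dt_leib Dt_metric by blast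

lemma Dt_J: "Dt u (J v) = J (Dt u v)"
proof (rule ext_ip)
  fix w
  have r: "ip (J (Dt u v)) w = - ip (Dt u v) (J w)" by (rule ip_JL)
  have d: "ip (D u (J v)) w = ip (Cv u v) w - ip (D u v) (J w)"
    by (simp add: DJ ip_addL ip_JL)
  have p: "ip (Cv u (J v)) (J w) = - ip (Cv u v) w" by (rule Phi_JJ)
  have "ip (Cv u v) w = 8 * ee * ip (Cv u v) w" by (simp add: e8)
  then show "ip (Dt u (J v)) w = ip (J (Dt u v)) w"
    unfolding r by (simp add: Dt_ip d p JJ lin_simps algebra_simps)
qed

lemma br_ip: "ip (br a b) c = ip (D a b) c - ip (D b a) c + ip (D c a) b"
proof -
  have "br a b = D a b - D b a + adjoint ip (\<lambda>w. D w a) b"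
    using tf unfolding torsion_def by (metis diff_add_eq eq_iff_diff_eq_0)
  then show ?thesis
    by (simp add: ip_addL ip_diffL adjoint_char[OF D_endo] ip_sym[of b])
qed

lemma Dt_endo: "endo sm (\<lambda>w. Dt w u)"
  unfolding endo_def by (simp add: Dt_linL)

lemma torsion_Dt: "ip (torsion ip br Dt u v) w = of_real (1/4) * ip (nijenhuis br J u v) w"
proof -
  have t: "ip (torsion ip br Dt u v) w = ip (Dt u v) w - ip (Dt v u) w - ip (br u v) w + ip (Dt w u) v"
    unfolding torsion_def by (simp add: ip_addL ip_diffL adjoint_char[OF Dt_endo] ip_sym[of v])
  have n: "ip (nijenhuis br J u v) w = ip (br (J u) (J v)) w - ip (br u v) w
      + ip (br (J u) v) (J w) + ip (br u (J v)) (J w)"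
    unfolding nijenhuis_def by (simp add: ip_addL ip_diffL ip_JL)
  show ?thesis unfolding t n h4
    by (simp add: Dt_ip br_ip DJ ip_JL JJ lin_simps
        Phi_skew[of _ v u] Phi_skew[of _ w u] Phi_skew[of _ w v]
        Phi_swapJ[of _ v u] Phi_swapJ[of _ w u] Phi_swapJ[of _ w v] algebra_simps)
qed

end

theorem proposition3p6:
  fixes sm :: "'r::{comm_ring_1,real_algebra_1} \<Rightarrow> 's::ab_group_add \<Rightarrow> 's"
    and ip :: "'s \<Rightarrow> 's \<Rightarrow> 'r"
    and br :: "'s \<Rightarrow> 's \<Rightarrow> 's"
    and anc :: "'s \<Rightarrow> 'r \<Rightarrow> 'r"
    and D :: "'s \<Rightarrow> 's \<Rightarrow> 's"
    and J :: "'s \<Rightarrow> 's"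
  assumes "courant_algebroid sm ip br anc"
    and "gen_almost_complex sm ip J"
    and "gen_connection sm ip anc D"
    and "\<forall>u v. torsion ip br D u v = 0"
  shows "gen_connection sm ip anc (modified_conn sm ip D J)
    \<and> (\<forall>u v. modified_conn sm ip D J u (J v) = J (modified_conn sm ip D J u v))
    \<and> (\<forall>u v w. ip (torsion ip br (modified_conn sm ip D J) u v) w
                = of_real (1/4) * ip (nijenhuis br J u v) w)
    \<and> ((\<forall>u v. nijenhuis br J u v = 0) \<longrightarrow>
         (\<forall>u v. torsion ip br (modified_conn sm ip D J) u v = 0)
         \<and> (\<forall>u v. modified_conn sm ip D J u (J v) = J (modified_conn sm ip D J u v)))"
proof -
  interpret CA sm ip br anc D J using assms by unfold_locales
  have T: "\<forall>u v. (\<forall>u v. nijenhuis br J u v = 0) \<longrightarrow> torsion ip br Dt u v = 0"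
  proof (intro allI impI)
    fix u v assume N: "\<forall>u v. nijenhuis br J u v = 0"
    show "torsion ip br Dt u v = 0"
      by (rule ext_ip) (simp add: torsion_Dt N ip_zeroL)
  qed
  show ?thesis using Dt_conn Dt_J torsion_Dt T by blast
qed

end
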